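(* Let $R$ be a finite group, let $S\subseteq R$ and let $K,H$ be subgroups with $1<K<H<R$. Suppose that (1) $K$ is characteristic in $R$, (2) $K$ is maximal in $H$, (3) $K(S\setminus H)=S\setminus H$, and (4) $K(S\setminus K)\neq S\setminus K$. Then $\mathrm{Aut}(R)_S$ normalises $H$ (i.e. every automorphism of $R$ fixing $S$ setwise maps $H$ to itself).
   Context: $\mathrm{Aut}(R)_S$ denotes the group of automorphisms of $R$ that fix the subset $S$ setwise. *)

theory Defs
  imports "HOL-Algebra.Algebra"
begin

text \<open>Automorphisms of a group R (as group isomorphisms R to R; only their
  behaviour on the carrier matters).\<close>
definition Aut :: "('a, 'b) monoid_scheme \<Rightarrow> ('a \<Rightarrow> 'a) set" where
  "Aut R = iso R R"

definition Aut_stab :: "('a, 'b) monoid_scheme \<Rightarrow> 'a set \<Rightarrow> ('a \<Rightarrow> 'a) set" where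
  "Aut_stab R S = {f \<in> Aut R. f ` S = S}"

definition characteristic :: "'a set \<Rightarrow> ('a, 'b) monoid_scheme \<Rightarrow> bool" where
  "characteristic K R \<longleftrightarrow> subgroup K R \<and> (\<forall>f\<in>Aut R. f ` K = K)"

definition maximal_in :: "'a set \<Rightarrow> 'a set \<Rightarrow> ('a, 'b) monoid_scheme \<Rightarrow> bool" where
  "maximal_in K H R \<longleftrightarrow> subgroup K R \<and> subgroup H R \<and> K \<subset> H \<and>
     (\<forall>L. subgroup L R \<and> K \<subseteq> L \<and> L \<subseteq> H \<longrightarrow> L = K \<or> L = H)"

end

theory Submission
  imports Defs
begin

theorem proposition2p4:
  fixes R :: "('a, 'b) monoid_scheme" and S K H :: "'a set"
  assumes "group R" and "finite (carrier R)"
    and "S \<subseteq> carrier R"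
    and "subgroup K R" and "subgroup H R"
    and "{\<one>\<^bsub>R\<^esub>} \<subset> K" and "K \<subset> H" and "H \<subset> carrier R"
    and "characteristic K R"
    and "maximal_in K H R"
    and "K <#>\<^bsub>R\<^esub> (S - H) = S - H"
    and "K <#>\<^bsub>R\<^esub> (S - K) \<noteq> S - K"
  shows "\<forall>f \<in> Aut_stab R S. f ` H = H"
proof
  fix f assume fA: "f \<in> Aut_stab R S"
  interpret G: group R by fact
  have fiso: "f \<in> iso R R" and fS: "f ` S = S" using fA by (auto simp: Aut_stab_def Aut_def)
  have fhom: "f \<in> hom R R" and finj: "inj_on f (carrier R)" and fsurj: "f ` carrier R = carrier R"
    using fiso by (auto simp: iso_iff)
  have fK: "f ` K = K" using assms(9) fiso by (auto simp: characteristic_def Aut_def)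
  have Kc: "K \<subseteq> carrier R" using assms(4) subgroup.subset by blast
  have Hc: "H \<subseteq> carrier R" using assms(5) subgroup.subset by blast
  have one: "\<one>\<^bsub>R\<^esub> \<in> K" using assms(4) subgroup.one_closed by blast
  have "S - K \<subseteq> K <#>\<^bsub>R\<^esub> (S - K)"
  proof
    fix x assume "x \<in> S - K"
    then have "x = \<one>\<^bsub>R\<^esub> \<otimes>\<^bsub>R\<^esub> x" using assms(3) by auto
    then show "x \<in> K <#>\<^bsub>R\<^esub> (S - K)" using one \<open>x \<in> S - K\<close> unfolding set_mult_def by blast
  qed
  then obtain k x where k: "k \<in> K" and x: "x \<in> S - K" and kx: "k \<otimes>\<^bsub>R\<^esub> x \<notin> S - K"
    using assms(12) unfolding set_mult_def by blast
  have xc: "x \<in> carrier R" and kc: "k \<in> carrier R" using x k assms(3) Kc by auto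
  have "k \<otimes>\<^bsub>R\<^esub> x \<notin> K"
  proof
    assume "k \<otimes>\<^bsub>R\<^esub> x \<in> K"
    then have "inv\<^bsub>R\<^esub> k \<otimes>\<^bsub>R\<^esub> (k \<otimes>\<^bsub>R\<^esub> x) \<in> K"
      using k assms(4) by (meson subgroup.m_closed subgroup.m_inv_closed)
    then show False using x xc kc by (simp add: G.m_assoc[symmetric])
  qed
  then have kxS: "k \<otimes>\<^bsub>R\<^esub> x \<notin> S" using kx by blast
  have xH: "x \<in> H"
  proof (rule ccontr)
    assume "x \<notin> H"
    then have "k \<otimes>\<^bsub>R\<^esub> x \<in> K <#>\<^bsub>R\<^esub> (S - H)" using k x unfolding set_mult_def by blast
    then show False using assms(11) kxS by blast
  qed
  have xfH: "x \<in> f ` H"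
  proof (rule ccontr)
    assume nx: "x \<notin> f ` H"
    obtain y where y: "y \<in> S" "x = f y" using x fS by blast
    have yH: "y \<notin> H" using nx y by blast
    obtain k' where k': "k' \<in> K" "k = f k'" using k fK by blast
    have "k' \<otimes>\<^bsub>R\<^esub> y \<in> K <#>\<^bsub>R\<^esub> (S - H)" using k' y yH unfolding set_mult_def by blast
    then have "k' \<otimes>\<^bsub>R\<^esub> y \<in> S" using assms(11) by blast
    moreover have "f (k' \<otimes>\<^bsub>R\<^esub> y) = k \<otimes>\<^bsub>R\<^esub> x"
    proof -
      have "k' \<in> carrier R" "y \<in> carrier R" using k' y Kc assms(3) by auto
      then show ?thesis using fhom k'(2) y(2) by (simp add: hom_mult)
    qed
    ultimately show False using fS kxS by (metis imageI)
  qed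
  have sfH: "subgroup (f ` H) R" using subgroup.iso_subgroup[OF assms(5) assms(1) assms(1) fiso] .
  have L: "subgroup (H \<inter> f ` H) R" by (rule G.subgroups_Inter_pair[OF assms(5) sfH])
  have KL: "K \<subseteq> H \<inter> f ` H" using assms(7) fK by blast
  have "H \<inter> f ` H \<noteq> K" using xH xfH x by blast
  then have "H \<inter> f ` H = H" using assms(10) L KL unfolding maximal_in_def by blast
  then have sub: "H \<subseteq> f ` H" by blast
  have fin: "finite (f ` H)" using Hc assms(2) finite_subset by blast
  have "card (f ` H) = card H" using finj Hc by (meson card_image inj_on_subset)
  then show "f ` H = H" using sub fin by (metis card_subset_eq)
qed

end
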